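(* Let $(p,f)$ be an SCF-RT rationalizable within the class of all RUM-CFs, let $(x,y)\in D$, and for $t\geq0$ let $q(x,y)(t)=\frac{p(x,y)f(x,y)(t)}{p(y,x)f(y,x)(t)}$. If $q(x,y)(t)\geq1$ for almost all $t\geq0$, then every RUM-CF $(u,g,r)$ rationalizing $(p,f)$ satisfies $u(x)\geq u(y)$. If additionally $q(x,y)(t)>1$ on a set of $t$ of positive Lebesgue measure, then every such model satisfies $u(x)>u(y)$.
   Context: $X$ is a finite set of options; $C=\{(x,y): x,y\in X,\ x\neq y\}$; $D\subseteq C$ is a fixed non-empty set with $(x,y)\in D\Rightarrow (y,x)\in D$. An SCF $p$ assigns to each $(x,y)\in D$ a number $p(x,y)>0$ with $p(x,y)+p(y,x)=1$. An SCF-RT is a pair $(p,f)$ where $p$ is an SCF and $f$ assigns to each $(x,y)\in D$ a strictly positive density $f(x,y)$ on $\mathbb{R}^+$ with cdf $F(x,y)$. A RUM is a pair $(u,g)$ with $u:X\to\mathbb{R}$ and $g$ assigning to each $(x,y)\in C$ a density $g(x,y)$ on $\mathbb{R}$ (cdf $G(x,y)$) with $\int v\,g(x,y)(v)\,dv=u(x)-u(y)$, $g(x,y)(v)=g(y,x)(-v)$ for all $v$, and connected support. A RUM-CF is $(u,g,r)$ with $(u,g)$ a RUM and $r:\mathbb{R}^{++}\to\mathbb{R}^+$ continuous, strictly decreasing where $r(v)>0$, $\lim_{v\to0}r(v)=\infty$, $\lim_{v\to\infty}r(v)=0$; $r^{-1}(t)$ ($t>0$) is the inverse of $r$ restricted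 to $\{r>0\}$. It rationalizes $(p,f)$ if for all $(x,y)\in D$: $G(x,y)(0)=p(y,x)$ and $\frac{1-G(x,y)(r^{-1}(t))}{1-G(x,y)(0)}=F(x,y)(t)$ for all $t>0$. *)

theory Defs
  imports "HOL-Analysis.Analysis"
begin

definition pairs_C :: "'a set \<Rightarrow> ('a \<times> 'a) set" where
  "pairs_C X = {(x, y). x \<in> X \<and> y \<in> X \<and> x \<noteq> y}"

definition domain_ok :: "'a set \<Rightarrow> ('a \<times> 'a) set \<Rightarrow> bool" where
  "domain_ok X D \<longleftrightarrow> finite X \<and> D \<subseteq> pairs_C X \<and> D \<noteq> {} \<and>
     (\<forall>x y. (x, y) \<in> D \<longrightarrow> (y, x) \<in> D)"

definition SCF :: "('a \<times> 'a) set \<Rightarrow> ('a \<Rightarrow> 'a \<Rightarrow> real) \<Rightarrow> bool" where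
  "SCF D p \<longleftrightarrow> (\<forall>x y. (x, y) \<in> D \<longrightarrow> p x y > 0 \<and> p x y + p y x = 1)"

definition pos_density_Rplus :: "(real \<Rightarrow> real) \<Rightarrow> bool" where
  "pos_density_Rplus h \<longleftrightarrow> (\<forall>t\<ge>0. h t > 0) \<and> set_integrable lborel {0..} h \<and>
     (LINT t:{0..}|lborel. h t) = 1"

definition cdf_Rplus :: "(real \<Rightarrow> real) \<Rightarrow> real \<Rightarrow> real" where
  "cdf_Rplus h t = (LINT s:{0..t}|lborel. h s)"

definition SCF_RT :: "'a set \<Rightarrow> ('a \<times> 'a) set \<Rightarrow> ('a \<Rightarrow> 'a \<Rightarrow> real)
    \<Rightarrow> ('a \<Rightarrow> 'a \<Rightarrow> real \<Rightarrow> real) \<Rightarrow> bool" where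
  "SCF_RT X D p f \<longleftrightarrow> domain_ok X D \<and> SCF D p \<and>
     (\<forall>x y. (x, y) \<in> D \<longrightarrow> pos_density_Rplus (f x y))"

definition density_R :: "(real \<Rightarrow> real) \<Rightarrow> bool" where
  "density_R h \<longleftrightarrow> (\<forall>v. h v \<ge> 0) \<and> integrable lborel h \<and> (LINT v|lborel. h v) = 1"

definition cdf_R :: "(real \<Rightarrow> real) \<Rightarrow> real \<Rightarrow> real" where
  "cdf_R h v = (LINT w:{..v}|lborel. h w)"

definition dsupport :: "(real \<Rightarrow> real) \<Rightarrow> real set" where
  "dsupport h = closure {v. h v \<noteq> 0}"

definition RUM :: "'a set \<Rightarrow> ('a \<Rightarrow> real) \<Rightarrow> ('a \<Rightarrow> 'a \<Rightarrow> real \<Rightarrow> real) \<Rightarrow> bool" where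
  "RUM X u g \<longleftrightarrow> (\<forall>x y. (x, y) \<in> pairs_C X \<longrightarrow>
      density_R (g x y) \<and>
      integrable lborel (\<lambda>v. v * g x y v) \<and>
      (LINT v|lborel. v * g x y v) = u x - u y \<and>
      (\<forall>v. g x y v = g y x (- v)) \<and>
      connected (dsupport (g x y)))"

definition choice_fun :: "(real \<Rightarrow> real) \<Rightarrow> bool" where
  "choice_fun r \<longleftrightarrow> (\<forall>v>0. r v \<ge> 0) \<and> continuous_on {0<..} r \<and>
     (\<forall>v w. 0 < v \<and> v < w \<and> 0 < r v \<and> 0 < r w \<longrightarrow> r w < r v) \<and>
     filterlim r at_top (at_right 0) \<and> (r \<longlongrightarrow> 0) at_top"

definition r_inv :: "(real \<Rightarrow> real) \<Rightarrow> real \<Rightarrow> real" where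
  "r_inv r t = (THE v. 0 < v \<and> 0 < r v \<and> r v = t)"

definition RUM_CF :: "'a set \<Rightarrow> ('a \<Rightarrow> real) \<Rightarrow> ('a \<Rightarrow> 'a \<Rightarrow> real \<Rightarrow> real)
    \<Rightarrow> (real \<Rightarrow> real) \<Rightarrow> bool" where
  "RUM_CF X u g r \<longleftrightarrow> RUM X u g \<and> choice_fun r"

definition rationalizes :: "('a \<times> 'a) set \<Rightarrow> ('a \<Rightarrow> 'a \<Rightarrow> real) \<Rightarrow> ('a \<Rightarrow> 'a \<Rightarrow> real \<Rightarrow> real)
    \<Rightarrow> ('a \<Rightarrow> real) \<Rightarrow> ('a \<Rightarrow> 'a \<Rightarrow> real \<Rightarrow> real) \<Rightarrow> (real \<Rightarrow> real) \<Rightarrow> bool" where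
  "rationalizes D p f u g r \<longleftrightarrow> (\<forall>x y. (x, y) \<in> D \<longrightarrow>
      cdf_R (g x y) 0 = p y x \<and>
      (\<forall>t>0. (1 - cdf_R (g x y) (r_inv r t)) / (1 - cdf_R (g x y) 0) = cdf_Rplus (f x y) t))"

definition rationalizable_RUM_CF :: "'a set \<Rightarrow> ('a \<times> 'a) set \<Rightarrow> ('a \<Rightarrow> 'a \<Rightarrow> real)
    \<Rightarrow> ('a \<Rightarrow> 'a \<Rightarrow> real \<Rightarrow> real) \<Rightarrow> bool" where
  "rationalizable_RUM_CF X D p f \<longleftrightarrow> (\<exists>u g r. RUM_CF X u g r \<and> rationalizes D p f u g r)"

definition q_ratio :: "('a \<Rightarrow> 'a \<Rightarrow> real) \<Rightarrow> ('a \<Rightarrow> 'a \<Rightarrow> real \<Rightarrow> real) \<Rightarrow> 'a \<Rightarrow> 'a \<Rightarrow> real \<Rightarrow> real" where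
  "q_ratio p f x y t = (p x y * f x y t) / (p y x * f y x t)"

end

theory Submission imports Defs begin

lemma choice_funD:
  assumes "choice_fun r"
  shows "\<And>v. v > 0 \<Longrightarrow> r v \<ge> 0" and "continuous_on {0<..} r"
    and "\<And>v w. 0<v \<Longrightarrow> v<w \<Longrightarrow> 0<r v \<Longrightarrow> 0<r w \<Longrightarrow> r w < r v"
    and "filterlim r at_top (at_right 0)" and "(r \<longlongrightarrow> 0) at_top"
  using assms unfolding choice_fun_def by auto

lemma r_zero_prop:
  assumes r: "choice_fun r" and s: "0 < s" "s < v" and rs: "r s = 0"
  shows "r v = 0"
proof (rule ccontr)
  assume nz: "r v \<noteq> 0"
  have "r v \<ge> 0" using choice_funD[OF r] s by auto
  then have rv: "r v > 0" using nz by auto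
  have lim: "filterlim r at_top (at_right 0)" using choice_funD[OF r] by auto
  have "eventually (\<lambda>w. r w > r v) (at_right 0)"
    using lim by (simp add: filterlim_at_top_dense)
  then obtain b where b: "b > 0" "\<And>w. 0 < w \<Longrightarrow> w < b \<Longrightarrow> r w > r v"
    unfolding eventually_at_right_field by auto
  define w where "w = min b s / 2"
  have w: "0 < w" "w < b" "w < s" using b s unfolding w_def by auto
  have rw: "r w > r v" using b w by auto
  have cont: "continuous_on {w..s} r"
    by (rule continuous_on_subset[OF choice_funD(2)[OF r]]) (use w in auto)
  obtain c where c: "w \<le> c" "c \<le> s" "r c = r v"
    using IVT2'[of r s "r v" w] rs rv rw w cont by auto
  have dec: "\<And>v w. 0<v \<Longrightarrow> v<w \<Longrightarrow> 0<r v \<Longrightarrow> 0<r w \<Longrightarrow> r w < r v"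
    using choice_funD[OF r] by auto
  have "c < v" "0 < c" using c w s by auto
  then have "r v < r c" using dec[of c v] c rv by auto
  then show False using c by simp
qed

lemma r_inv_prop:
  assumes r: "choice_fun r" and t: "t > 0"
  shows "0 < r_inv r t \<and> r (r_inv r t) = t"
proof -
  have lim: "filterlim r at_top (at_right 0)" and lim2: "(r \<longlongrightarrow> 0) at_top"
    and cont: "continuous_on {0<..} r"
    using choice_funD[OF r] by auto
  have "eventually (\<lambda>w. r w > t) (at_right 0)"
    using lim by (simp add: filterlim_at_top_dense)
  then obtain b where b: "b > 0" "\<And>w. 0 < w \<Longrightarrow> w < b \<Longrightarrow> r w > t"
    unfolding eventually_at_right_field by auto
  define a where "a = b/2"
  have a: "a > 0" "r a > t" using b unfolding a_def by auto
  have "eventually (\<lambda>w. r w < t) at_top"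
    using order_tendstoD(2)[OF lim2 t] .
  then obtain N where N: "\<And>w. w \<ge> N \<Longrightarrow> r w < t"
    unfolding eventually_at_top_linorder by auto
  define bb where "bb = max N a"
  have bb: "a \<le> bb" "r bb < t" using N unfolding bb_def by auto
  have c2: "continuous_on {a..bb} r"
    by (rule continuous_on_subset[OF cont]) (use a in auto)
  obtain c where c: "a \<le> c" "c \<le> bb" "r c = t"
    using IVT2'[of r bb t a] bb a c2 by auto
  have ex: "0 < c \<and> 0 < r c \<and> r c = t" using c a t by auto
  have uniq: "v = c" if "0 < v \<and> 0 < r v \<and> r v = t" for v
  proof (rule ccontr)
    assume "v \<noteq> c"
    have dec: "\<And>v w. 0<v \<Longrightarrow> v<w \<Longrightarrow> 0<r v \<Longrightarrow> 0<r w \<Longrightarrow> r w < r v"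
      using choice_funD[OF r] by auto
    from \<open>v \<noteq> c\<close> have "v < c \<or> c < v" by auto
    then show False
    proof
      assume "v < c" then have "r c < r v" using dec[of v c] that ex by auto
      then show False using that ex by simp
    next
      assume "c < v" then have "r v < r c" using dec[of c v] that ex by auto
      then show False using that ex by simp
    qed
  qed
  have "r_inv r t = c" unfolding r_inv_def
    by (rule the_equality) (use ex in simp, use uniq in blast)
  then show ?thesis using ex by simp
qed

lemma r_inv_r:
  assumes r: "choice_fun r" and s: "0 < s" "0 < r s"
  shows "r_inv r (r s) = s"
proof -
  define v where "v = r_inv r (r s)"
  have P: "0 < v" "r v = r s" using r_inv_prop[OF r s(2)] unfolding v_def by auto
  have dec: "\<And>v w. 0<v \<Longrightarrow> v<w \<Longrightarrow> 0<r v \<Longrightarrow> 0<r w \<Longrightarrow> r w < r v"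
    using choice_funD[OF r] by auto
  have "\<not> v < s" using dec[of v s] P s by auto
  moreover have "\<not> s < v" using dec[of s v] P s by auto
  ultimately show ?thesis unfolding v_def by auto
qed


definition tailf :: "(real \<Rightarrow> real) \<Rightarrow> real \<Rightarrow> ennreal" where
  "tailf \<phi> s = (\<integral>\<^sup>+ v. ennreal (indicator {s<..} v * \<phi> v) \<partial>lborel)"

lemma tailf_eq:
  assumes d: "density_R \<phi>"
  shows "tailf \<phi> s = ennreal (1 - cdf_R \<phi> s)"
proof -
  have nn: "\<And>v. \<phi> v \<ge> 0" and int: "integrable lborel \<phi>" and one: "(LINT v|lborel. \<phi> v) = 1"
    using d unfolding density_R_def by auto
  have i1: "integrable lborel (\<lambda>v. indicator {s<..} v * \<phi> v)"
    using integrable_mult_indicator[OF _ int] by simp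
  have i2: "integrable lborel (\<lambda>v. indicator {..s} v * \<phi> v)"
    using integrable_mult_indicator[OF _ int] by simp
  have "tailf \<phi> s = ennreal (LINT v|lborel. indicator {s<..} v * \<phi> v)"
    unfolding tailf_def by (rule nn_integral_eq_integral[OF i1]) (auto simp: nn)
  moreover have "(LINT v|lborel. indicator {s<..} v * \<phi> v) + (LINT v|lborel. indicator {..s} v * \<phi> v) = 1"
  proof -
    have "(LINT v|lborel. indicator {s<..} v * \<phi> v) + (LINT v|lborel. indicator {..s} v * \<phi> v)
       = (LINT v|lborel. indicator {s<..} v * \<phi> v + indicator {..s} v * \<phi> v)"
      using i1 i2 by simp
    also have "\<dots> = (LINT v|lborel. \<phi> v)"
      by (rule Bochner_Integration.integral_cong) (auto simp: indicator_def)
    finally show ?thesis using one by simp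
  qed
  moreover have "cdf_R \<phi> s = (LINT v|lborel. indicator {..s} v * \<phi> v)"
    unfolding cdf_R_def set_lebesgue_integral_def by simp
  ultimately show ?thesis
    by (metis add_diff_cancel_right')
qed

lemma tonelli_tail:
  assumes d: "density_R \<phi>"
  shows "(\<integral>\<^sup>+ v. ennreal (max v 0 * \<phi> v) \<partial>lborel)
       = (\<integral>\<^sup>+ s. ennreal (indicator {0<..} s) * tailf \<phi> s \<partial>lborel)"
proof -
  have nn: "\<And>v. \<phi> v \<ge> 0" and int: "integrable lborel \<phi>"
    using d unfolding density_R_def by auto
  have [measurable]: "\<phi> \<in> borel_measurable borel" using int by auto
  have step1: "ennreal (max v 0 * \<phi> v) = (\<integral>\<^sup>+ s. ennreal (indicator {0<..<v} s * \<phi> v) \<partial>lborel)" for v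
  proof -
    have "(\<integral>\<^sup>+ s. ennreal (indicator {0<..<v} s * \<phi> v) \<partial>lborel)
        = (\<integral>\<^sup>+ s. ennreal (\<phi> v) * indicator {0<..<v} s \<partial>lborel)"
      by (rule nn_integral_cong) (auto simp: indicator_def)
    also have "\<dots> = ennreal (\<phi> v) * emeasure lborel {0<..<v}"
      by (simp add: nn_integral_cmult_indicator)
    also have "\<dots> = ennreal (max v 0 * \<phi> v)"
      using nn[of v] by (cases "0 \<le> v") (auto simp: ennreal_mult' mult.commute max_def)
    finally show ?thesis by simp
  qed
  have meas: "(\<lambda>(s, v). ennreal (indicator {0<..<v} s * \<phi> v)) \<in> borel_measurable (lborel \<Otimes>\<^sub>M lborel)"
  proof -
    have "(\<lambda>(s, v). ennreal (indicator {0<..<v} s * \<phi> v))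
        = (\<lambda>p. ennreal ((if 0 < fst p \<and> fst p < snd p then 1 else 0) * \<phi> (snd p)))"
      by (auto simp: indicator_def fun_eq_iff)
    also have "\<dots> \<in> borel_measurable (lborel \<Otimes>\<^sub>M lborel)" by measurable
    finally show ?thesis .
  qed
  have "(\<integral>\<^sup>+ v. ennreal (max v 0 * \<phi> v) \<partial>lborel)
      = (\<integral>\<^sup>+ v. (\<integral>\<^sup>+ s. ennreal (indicator {0<..<v} s * \<phi> v) \<partial>lborel) \<partial>lborel)"
    by (simp add: step1)
  also have "\<dots> = (\<integral>\<^sup>+ s. (\<integral>\<^sup>+ v. ennreal (indicator {0<..<v} s * \<phi> v) \<partial>lborel) \<partial>lborel)"
    by (rule lborel_pair.Fubini'[OF meas])
  also have "\<dots> = (\<integral>\<^sup>+ s. ennreal (indicator {0<..} s) * tailf \<phi> s \<partial>lborel)"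
  proof (rule nn_integral_cong)
    fix s :: real
    have "(\<integral>\<^sup>+ v. ennreal (indicator {0<..<v} s * \<phi> v) \<partial>lborel)
        = (\<integral>\<^sup>+ v. ennreal (indicator {0<..} s) * ennreal (indicator {s<..} v * \<phi> v) \<partial>lborel)"
      by (rule nn_integral_cong) (auto simp: indicator_def)
    also have "\<dots> = ennreal (indicator {0<..} s) * tailf \<phi> s"
      unfolding tailf_def by (rule nn_integral_cmult) measurable
    finally show "(\<integral>\<^sup>+ v. ennreal (indicator {0<..<v} s * \<phi> v) \<partial>lborel) = ennreal (indicator {0<..} s) * tailf \<phi> s" .
  qed
  finally show ?thesis .
qed


lemma mean_split:
  assumes d: "density_R \<phi>" and im: "integrable lborel (\<lambda>v. v * \<phi> v)"
    and sym: "\<And>v. \<psi> v = \<phi> (- v)"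
  shows "\<exists>P M. 0 \<le> P \<and> 0 \<le> M \<and> (LINT v|lborel. v * \<phi> v) = P - M \<and>
     (\<integral>\<^sup>+ v. ennreal (max v 0 * \<phi> v) \<partial>lborel) = ennreal P \<and>
     (\<integral>\<^sup>+ v. ennreal (max v 0 * \<psi> v) \<partial>lborel) = ennreal M"
proof -
  have nn: "\<And>v. \<phi> v \<ge> 0" and int: "integrable lborel \<phi>"
    using d unfolding density_R_def by auto
  have [measurable]: "\<phi> \<in> borel_measurable borel" using int by auto
  have e1: "max v 0 * \<phi> v = max (v * \<phi> v) 0" for v
    using nn[of v] by (cases "0 \<le> v") (auto simp: max_def mult_nonpos_nonneg mult_le_0_iff zero_le_mult_iff)
  have e2: "max (- v) 0 * \<phi> v = max (- (v * \<phi> v)) 0" for v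
    using nn[of v] by (cases "0 \<le> v") (auto simp: max_def mult_nonpos_nonneg mult_le_0_iff zero_le_mult_iff)
  have iP: "integrable lborel (\<lambda>v. max v 0 * \<phi> v)"
    unfolding e1 using im by auto
  have iM: "integrable lborel (\<lambda>v. max (- v) 0 * \<phi> v)"
    unfolding e2 using im by auto
  define P where "P = (LINT v|lborel. max v 0 * \<phi> v)"
  define M where "M = (LINT v|lborel. max (- v) 0 * \<phi> v)"
  have P0: "0 \<le> P" unfolding P_def by (rule integral_nonneg_AE) (auto simp: nn)
  have M0: "0 \<le> M" unfolding M_def by (rule integral_nonneg_AE) (auto simp: nn)
  have "(LINT v|lborel. v * \<phi> v) = (LINT v|lborel. max v 0 * \<phi> v - max (- v) 0 * \<phi> v)"
    by (rule Bochner_Integration.integral_cong) (auto simp: max_def algebra_simps)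
  also have "\<dots> = P - M" unfolding P_def M_def using iP iM by simp
  finally have mean: "(LINT v|lborel. v * \<phi> v) = P - M" .
  have nP: "(\<integral>\<^sup>+ v. ennreal (max v 0 * \<phi> v) \<partial>lborel) = ennreal P"
    unfolding P_def by (rule nn_integral_eq_integral[OF iP]) (auto simp: nn)
  have "(\<integral>\<^sup>+ v. ennreal (max (- v) 0 * \<phi> v) \<partial>lborel)
      = (\<integral>\<^sup>+ v. ennreal (max v 0 * \<phi> (- v)) \<partial>lborel)"
    using nn_integral_real_affine[of "\<lambda>v. ennreal (max (- v) 0 * \<phi> v)" "- 1" 0] by simp
  also have "\<dots> = (\<integral>\<^sup>+ v. ennreal (max v 0 * \<psi> v) \<partial>lborel)"
    by (simp add: sym)
  finally have "(\<integral>\<^sup>+ v. ennreal (max v 0 * \<psi> v) \<partial>lborel) = ennreal M"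
    unfolding M_def using nn_integral_eq_integral[OF iM] nn by (simp add: max_def)
  then show ?thesis using P0 M0 mean nP by blast
qed


lemma posdens_int:
  assumes h: "pos_density_Rplus h"
  shows "integrable lborel (\<lambda>s. indicator {0..t} s * h s)"
    and "cdf_Rplus h t = (LINT s|lborel. indicator {0..t} s * h s)"
    and "cdf_Rplus h t \<ge> 0"
proof -
  have i0: "integrable lborel (\<lambda>s. indicator {0..} s * h s)"
    using h unfolding pos_density_Rplus_def set_integrable_def by simp
  have "integrable lborel (\<lambda>s. indicator {0..t} s * (indicator {0..} s * h s))"
    using integrable_mult_indicator[OF _ i0, of "{0..t}"] by simp
  moreover have "(\<lambda>s. indicator {0..t} s * (indicator {0..} s * h s)) = (\<lambda>s. indicator {0..t} s * h s)"
    by (auto simp: indicator_def fun_eq_iff)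
  ultimately show "integrable lborel (\<lambda>s. indicator {0..t} s * h s)" by simp
  show eq: "cdf_Rplus h t = (LINT s|lborel. indicator {0..t} s * h s)"
    unfolding cdf_Rplus_def set_lebesgue_integral_def by simp
  have "\<And>s. 0 \<le> indicator {0..t} s * h s"
    using h unfolding pos_density_Rplus_def by (auto simp: indicator_def less_imp_le)
  then show "cdf_Rplus h t \<ge> 0" unfolding eq by (simp add: integral_nonneg_AE)
qed

lemma posdens_lim0:
  assumes h: "pos_density_Rplus h"
  shows "(\<lambda>n. cdf_Rplus h (inverse (real (Suc n)))) \<longlonglongrightarrow> 0"
proof -
  have i0: "integrable lborel (\<lambda>s. indicator {0..} s * h s)"
    using h unfolding pos_density_Rplus_def set_integrable_def by simp
  have hnn: "\<And>s. s \<ge> 0 \<Longrightarrow> h s \<ge> 0" using h unfolding pos_density_Rplus_def by (auto simp: less_imp_le)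
  have eqs: "(\<lambda>s. indicator {0..inverse (real (Suc n))} s * h s)
      = (\<lambda>s. indicator {0..inverse (real (Suc n))} s * (indicator {0..} s * h s))" for n
    by (auto simp: indicator_def fun_eq_iff)
  have m0[measurable]: "(\<lambda>s. indicator {0..} s * h s) \<in> borel_measurable lborel" using i0 by auto
  have "(\<lambda>n. LINT s|lborel. indicator {0..inverse (real (Suc n))} s * h s) \<longlonglongrightarrow> integral\<^sup>L lborel (\<lambda>s::real. 0::real)"
  proof (rule integral_dominated_convergence[where w="\<lambda>s. indicator {0..} s * h s"
        and s="\<lambda>n s. indicator {0..inverse (real (Suc n))} s * h s" and f="\<lambda>s. 0"])
    show "(\<lambda>s. 0::real) \<in> borel_measurable lborel" by simp
    show "(\<lambda>s. indicator {0..inverse (real (Suc n))} s * h s) \<in> borel_measurable lborel" for n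
      unfolding eqs by measurable
    show "integrable lborel (\<lambda>s. indicator {0..} s * h s)" by (rule i0)
    show "AE s in lborel. norm (indicator {0..inverse (real (Suc n))} s * h s) \<le> indicator {0..} s * h s" for n
      using hnn by (auto simp: indicator_def)
    show "AE s in lborel. (\<lambda>n. indicator {0..inverse (real (Suc n))} s * h s) \<longlonglongrightarrow> 0"
      using AE_lborel_singleton[of 0]
    proof eventually_elim
      case (elim s)
      show ?case
      proof (cases "s < 0")
        case True then show ?thesis by (simp add: indicator_def)
      next
        case False
        then have "s > 0" using elim by auto
        then have "eventually (\<lambda>n. inverse (real (Suc n)) < s) sequentially"
          using order_tendstoD(2)[OF LIMSEQ_inverse_real_of_nat] by auto
        then have "eventually (\<lambda>n. indicator {0..inverse (real (Suc n))} s * h s = 0) sequentially"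
          by eventually_elim (auto simp: indicator_def)
        then show ?thesis by (rule tendsto_eventually)
      qed
    qed
  qed
  then show ?thesis using posdens_int(2)[OF h] by simp
qed


lemma tailf_meas:
  assumes d: "density_R \<phi>"
  shows "tailf \<phi> \<in> borel_measurable lborel"
proof -
  have int: "integrable lborel \<phi>" using d unfolding density_R_def by auto
  have [measurable]: "\<phi> \<in> borel_measurable borel" using int by auto
  have "(\<lambda>(s, v). ennreal (indicator {s<..} v * \<phi> v))
      = (\<lambda>p. ennreal ((if fst p < snd p then 1 else 0) * \<phi> (snd p)))"
    by (auto simp: indicator_def fun_eq_iff)
  also have "\<dots> \<in> borel_measurable (lborel \<Otimes>\<^sub>M lborel)" by measurable
  finally have m: "(\<lambda>(s, v). ennreal (indicator {s<..} v * \<phi> v)) \<in> borel_measurable (lborel \<Otimes>\<^sub>M lborel)" .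
  show ?thesis unfolding tailf_def[abs_def]
    by (rule lborel.borel_measurable_nn_integral[OF m])
qed

lemma tailf_mono:
  assumes d: "density_R \<phi>" and st: "s' \<le> s"
  shows "tailf \<phi> s \<le> tailf \<phi> s'"
proof -
  have nn: "\<And>v. \<phi> v \<ge> 0" using d unfolding density_R_def by auto
  show ?thesis unfolding tailf_def
    by (rule nn_integral_mono) (use nn st in \<open>auto simp: indicator_def\<close>)
qed


theorem corollary1:
  fixes X :: "'a set" and D :: "('a \<times> 'a) set"
    and p :: "'a \<Rightarrow> 'a \<Rightarrow> real" and f :: "'a \<Rightarrow> 'a \<Rightarrow> real \<Rightarrow> real"
    and x y :: 'a
  assumes "SCF_RT X D p f"
    and "rationalizable_RUM_CF X D p f"
    and "(x, y) \<in> D"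
  shows "((AE t in lborel. t \<ge> 0 \<longrightarrow> q_ratio p f x y t \<ge> 1) \<longrightarrow>
           (\<forall>u g r. RUM_CF X u g r \<and> rationalizes D p f u g r \<longrightarrow> u x \<ge> u y))
       \<and> ((AE t in lborel. t \<ge> 0 \<longrightarrow> q_ratio p f x y t \<ge> 1) \<and>
           emeasure lborel {t. t \<ge> 0 \<and> q_ratio p f x y t > 1} > 0 \<longrightarrow>
           (\<forall>u g r. RUM_CF X u g r \<and> rationalizes D p f u g r \<longrightarrow> u x > u y))"
proof -
  have dom: "domain_ok X D" and scf: "SCF D p"
    and dens: "\<And>a b. (a, b) \<in> D \<Longrightarrow> pos_density_Rplus (f a b)"
    using assms(1) unfolding SCF_RT_def by auto
  have xy: "(x, y) \<in> D" by (rule assms(3))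
  have yx: "(y, x) \<in> D" using dom xy unfolding domain_ok_def by auto
  have xyC: "(x, y) \<in> pairs_C X" "(y, x) \<in> pairs_C X"
    using dom xy yx unfolding domain_ok_def by auto
  have pxy: "p x y > 0" "p y x > 0" "p x y + p y x = 1"
    using scf xy yx unfolding SCF_def by auto
  have hxy: "pos_density_Rplus (f x y)" and hyx: "pos_density_Rplus (f y x)"
    using dens xy yx by auto
  have fpos: "\<And>s. s \<ge> 0 \<Longrightarrow> f x y s > 0" "\<And>s. s \<ge> 0 \<Longrightarrow> f y x s > 0"
    using hxy hyx unfolding pos_density_Rplus_def by auto
  define d where "d s = p x y * f x y s - p y x * f y x s" for s
  define Dt where "Dt t = p x y * cdf_Rplus (f x y) t - p y x * cdf_Rplus (f y x) t" for t
  have intd: "integrable lborel (\<lambda>s. indicator {0..t} s * d s)" for t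
  proof -
    have "integrable lborel (\<lambda>s. p x y * (indicator {0..t} s * f x y s) - p y x * (indicator {0..t} s * f y x s))"
      using posdens_int(1)[OF hxy, of t] posdens_int(1)[OF hyx, of t] by auto
    then show ?thesis unfolding d_def by (simp add: algebra_simps)
  qed
  have Dteq: "Dt t = (LINT s|lborel. indicator {0..t} s * d s)" for t
  proof -
    have "(LINT s|lborel. indicator {0..t} s * d s) = (LINT s|lborel. p x y * (indicator {0..t} s * f x y s) - p y x * (indicator {0..t} s * f y x s))"
      unfolding d_def by (rule Bochner_Integration.integral_cong) (auto simp: algebra_simps)
    also have "\<dots> = p x y * (LINT s|lborel. indicator {0..t} s * f x y s) - p y x * (LINT s|lborel. indicator {0..t} s * f y x s)"
      using posdens_int(1)[OF hxy, of t] posdens_int(1)[OF hyx, of t] by simp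
    finally show ?thesis unfolding Dt_def posdens_int(2)[OF hxy] posdens_int(2)[OF hyx] by simp
  qed
  have qle: "1 \<le> q_ratio p f x y s \<longleftrightarrow> 0 \<le> d s" if "s \<ge> 0" for s
  proof -
    have "p y x * f y x s > 0" using pxy fpos that by auto
    then show ?thesis unfolding q_ratio_def d_def by (simp add: le_divide_eq)
  qed
  have qlt: "1 < q_ratio p f x y s \<longleftrightarrow> 0 < d s" if "s \<ge> 0" for s
  proof -
    have "p y x * f y x s > 0" using pxy fpos that by auto
    then show ?thesis unfolding q_ratio_def d_def by (simp add: less_divide_eq)
  qed
  have key: "u y \<le> u x \<and> (emeasure lborel {t. t \<ge> 0 \<and> q_ratio p f x y t > 1} > 0 \<longrightarrow> u y < u x)"
    if H: "AE t in lborel. t \<ge> 0 \<longrightarrow> q_ratio p f x y t \<ge> 1"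
      and M: "RUM_CF X u g r \<and> rationalizes D p f u g r" for u g r
  proof -
    have Hd: "AE s in lborel. 0 \<le> indicator {0..t} s * d s" for t
      using H
    proof eventually_elim
      case (elim s)
      then show ?case by (cases "s \<in> {0..t}") (auto simp: qle)
    qed
    have Dnn: "0 \<le> Dt t" for t unfolding Dteq by (rule integral_nonneg_AE[OF Hd])
    have Dmono: "Dt t \<le> Dt t'" if tt: "t \<le> t'" for t t'
    proof -
      have "AE s in lborel. indicator {0..t} s * d s \<le> indicator {0..t'} s * d s"
        using H
      proof eventually_elim
        case (elim s)
        then show ?case using tt by (cases "s \<in> {0..t}"; cases "s \<in> {0..t'}") (auto simp: qle)
      qed
      then show ?thesis unfolding Dteq by (rule integral_mono_AE[OF intd intd])
    qed
    have rum: "RUM X u g" and cf: "choice_fun r" and rat: "rationalizes D p f u g r"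
      using M unfolding RUM_CF_def by auto
    have R: "\<And>a b. (a, b) \<in> pairs_C X \<Longrightarrow> density_R (g a b) \<and> integrable lborel (\<lambda>v. v * g a b v)
        \<and> (LINT v|lborel. v * g a b v) = u a - u b \<and> (\<forall>v. g a b v = g b a (- v))"
      using rum unfolding RUM_def by blast
    have R1: "density_R (g x y) \<and> integrable lborel (\<lambda>v. v * g x y v)
        \<and> (LINT v|lborel. v * g x y v) = u x - u y \<and> (\<forall>v. g x y v = g y x (- v))"
      by (rule R[OF xyC(1)])
    have R2: "density_R (g y x) \<and> integrable lborel (\<lambda>v. v * g y x v)
        \<and> (LINT v|lborel. v * g y x v) = u y - u x \<and> (\<forall>v. g y x v = g x y (- v))"
      by (rule R[OF xyC(2)])
    have dg: "density_R (g x y)" "density_R (g y x)" using R1 R2 by blast+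
    have im: "integrable lborel (\<lambda>v. v * g x y v)" and mean: "(LINT v|lborel. v * g x y v) = u x - u y"
      using R1 by blast+
    have sym: "\<And>v. g y x v = g x y (- v)" using R2 by blast
    have ratD: "\<And>a b. (a, b) \<in> D \<Longrightarrow> cdf_R (g a b) 0 = p b a \<and>
        (\<forall>t>0. (1 - cdf_R (g a b) (r_inv r t)) / (1 - cdf_R (g a b) 0) = cdf_Rplus (f a b) t)"
      using rat unfolding rationalizes_def by blast
    have tail1: "tailf (g x y) (r_inv r t) = ennreal (p x y * cdf_Rplus (f x y) t)" if "t > 0" for t
    proof -
      have c0: "cdf_R (g x y) 0 = p y x"
        and e: "(1 - cdf_R (g x y) (r_inv r t)) / (1 - cdf_R (g x y) 0) = cdf_Rplus (f x y) t"
        using ratD[OF xy] that by auto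
      have "1 - cdf_R (g x y) 0 = p x y" using c0 pxy by simp
      then have e2: "(1 - cdf_R (g x y) (r_inv r t)) / p x y = cdf_Rplus (f x y) t"
        using e by simp
      have "p x y \<noteq> 0" using pxy by simp
      then have "1 - cdf_R (g x y) (r_inv r t) = cdf_Rplus (f x y) t * p x y"
        using e2 by (simp add: divide_eq_eq)
      then have "1 - cdf_R (g x y) (r_inv r t) = p x y * cdf_Rplus (f x y) t"
        by (simp add: mult.commute)
      then show ?thesis using tailf_eq[OF dg(1)] by simp
    qed
    have tail2: "tailf (g y x) (r_inv r t) = ennreal (p y x * cdf_Rplus (f y x) t)" if "t > 0" for t
    proof -
      have c0: "cdf_R (g y x) 0 = p x y"
        and e: "(1 - cdf_R (g y x) (r_inv r t)) / (1 - cdf_R (g y x) 0) = cdf_Rplus (f y x) t"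
        using ratD[OF yx] that by auto
      have "1 - cdf_R (g y x) 0 = p y x" using c0 pxy by simp
      then have e2: "(1 - cdf_R (g y x) (r_inv r t)) / p y x = cdf_Rplus (f y x) t"
        using e by simp
      have "p y x \<noteq> 0" using pxy by simp
      then have "1 - cdf_R (g y x) (r_inv r t) = cdf_Rplus (f y x) t * p y x"
        using e2 by (simp add: divide_eq_eq)
      then have "1 - cdf_R (g y x) (r_inv r t) = p y x * cdf_Rplus (f y x) t"
        by (simp add: mult.commute)
      then show ?thesis using tailf_eq[OF dg(2)] by simp
    qed
    obtain P Mm where PM: "0 \<le> P" "0 \<le> Mm" "u x - u y = P - Mm"
      and A0: "(\<integral>\<^sup>+ v. ennreal (max v 0 * g x y v) \<partial>lborel) = ennreal P"
      and B0: "(\<integral>\<^sup>+ v. ennreal (max v 0 * g y x v) \<partial>lborel) = ennreal Mm"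
      using mean_split[OF dg(1) im, of "g y x"] sym mean by auto
    have A: "ennreal P = (\<integral>\<^sup>+ s. ennreal (indicator {0<..} s) * tailf (g x y) s \<partial>lborel)"
      using A0 tonelli_tail[OF dg(1)] by simp
    have B: "ennreal Mm = (\<integral>\<^sup>+ s. ennreal (indicator {0<..} s) * tailf (g y x) s \<partial>lborel)"
      using B0 tonelli_tail[OF dg(2)] by simp
    have dec: "\<And>v w. 0<v \<Longrightarrow> v<w \<Longrightarrow> 0<r v \<Longrightarrow> 0<r w \<Longrightarrow> r w < r v"
      using choice_funD[OF cf] by auto
    have wtail: "tailf (g y x) s \<le> tailf (g x y) s" if "s > 0" for s
    proof (cases "r s > 0")
      case True
      have "tailf (g y x) s = ennreal (p y x * cdf_Rplus (f y x) (r s))"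
        using tail2[OF True] r_inv_r[OF cf that True] by simp
      also have "\<dots> \<le> ennreal (p x y * cdf_Rplus (f x y) (r s))"
        using Dnn[of "r s"] unfolding Dt_def by (intro ennreal_leI) simp
      also have "\<dots> = tailf (g x y) s"
        using tail1[OF True] r_inv_r[OF cf that True] by simp
      finally show ?thesis .
    next
      case False
      then have rs: "r s = 0" using choice_funD(1)[OF cf that] by simp
      have bound: "tailf (g y x) s \<le> ennreal (p y x * cdf_Rplus (f y x) (inverse (real (Suc n))))" for n
      proof -
        define tn where "tn = inverse (real (Suc n))"
        have tn: "tn > 0" unfolding tn_def by simp
        define sn where "sn = r_inv r tn"
        have sn: "0 < sn" "r sn = tn" using r_inv_prop[OF cf tn] unfolding sn_def by auto
        have "sn \<le> s"
        proof (rule ccontr)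
          assume "\<not> sn \<le> s"
          then have "s < sn" by simp
          then have "r sn = 0" using r_zero_prop[OF cf that _ rs] by simp
          then show False using sn tn by simp
        qed
        then have "tailf (g y x) s \<le> tailf (g y x) sn" by (rule tailf_mono[OF dg(2)])
        also have "\<dots> = ennreal (p y x * cdf_Rplus (f y x) tn)" unfolding sn_def by (rule tail2[OF tn])
        finally show ?thesis unfolding tn_def .
      qed
      have lim: "(\<lambda>n. ennreal (p y x * cdf_Rplus (f y x) (inverse (real (Suc n))))) \<longlonglongrightarrow> ennreal (p y x * 0)"
        by (intro tendsto_ennrealI tendsto_mult tendsto_const posdens_lim0[OF hyx])
      have "tailf (g y x) s \<le> ennreal (p y x * 0)"
        using LIMSEQ_le_const[OF lim] bound by auto
      then show ?thesis by simp
    qed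
    have AEle: "AE s in lborel. ennreal (indicator {0<..} s) * tailf (g y x) s
        \<le> ennreal (indicator {0<..} s) * tailf (g x y) s"
    proof (rule AE_I2)
      fix s :: real
      show "ennreal (indicator {0<..} s) * tailf (g y x) s \<le> ennreal (indicator {0<..} s) * tailf (g x y) s"
        by (cases "0 < s") (auto simp: wtail)
    qed
    have BA: "ennreal Mm \<le> ennreal P"
      unfolding A B by (rule nn_integral_mono_AE[OF AEle])
    have "Mm \<le> P" by (rule iffD1[OF ennreal_le_iff[OF PM(1)] BA])
    then have weak: "u y \<le> u x" using PM(3) by linarith
    moreover have "u y < u x" if S: "emeasure lborel {t. t \<ge> 0 \<and> q_ratio p f x y t > 1} > 0"
    proof -
      have "\<exists>t0>0. Dt t0 > 0"
      proof (rule ccontr)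
        assume nex: "\<not> (\<exists>t0>0. Dt t0 > 0)"
        have D0: "Dt (real (Suc n)) = 0" for n
        proof -
          have "\<not> Dt (real (Suc n)) > 0"
          proof
            assume "Dt (real (Suc n)) > 0"
            then have "\<exists>t0>0. Dt t0 > 0" by (intro exI[of _ "real (Suc n)"]) simp
            with nex show False by blast
          qed
          then show ?thesis using Dnn[of "real (Suc n)"] by linarith
        qed
        have Z: "AE s in lborel. indicator {0..real (Suc n)} s * d s = 0" for n
          using D0[of n] integral_nonneg_eq_0_iff_AE[OF intd Hd] unfolding Dteq by simp
        have "AE s in lborel. \<forall>n. indicator {0..real (Suc n)} s * d s = 0"
          unfolding AE_all_countable using Z by blast
        then have "AE s in lborel. s \<ge> 0 \<longrightarrow> d s = 0"
        proof eventually_elim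
          case (elim s)
          show ?case
          proof
            assume s0: "s \<ge> 0"
            obtain n where "s \<le> real n" using real_arch_simple[of s] by auto
            then have "s \<le> real (Suc n)" by simp
            then have "indicator {0..real (Suc n)} s = (1::real)" using s0 by (simp add: indicator_def)
            then show "d s = 0" using elim[rule_format, of n] by simp
          qed
        qed
        then obtain N where N: "{s \<in> space lborel. \<not> (s \<ge> 0 \<longrightarrow> d s = 0)} \<subseteq> N"
            "emeasure lborel N = 0" "N \<in> sets lborel"
          by (rule AE_E)
        have "{t. t \<ge> 0 \<and> q_ratio p f x y t > 1} \<subseteq> N"
          using N(1) qlt by fastforce
        then have "emeasure lborel {t. t \<ge> 0 \<and> q_ratio p f x y t > 1} \<le> emeasure lborel N"
          by (rule emeasure_mono[OF _ N(3)])
        then show False using S N(2) by simp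
      qed
      then obtain t0 where t0: "t0 > 0" "Dt t0 > 0" by auto
      define s0 where "s0 = r_inv r t0"
      have s0: "0 < s0" "r s0 = t0" using r_inv_prop[OF cf t0(1)] unfolding s0_def by auto
      have stail: "tailf (g y x) s < tailf (g x y) s" if ss: "0 < s" "s \<le> s0" for s
      proof -
        have rs0: "r s \<ge> 0" using choice_funD(1)[OF cf ss(1)] .
        have rspos: "r s > 0"
        proof (rule ccontr)
          assume "\<not> r s > 0"
          then have rz: "r s = 0" using rs0 by simp
          have "r s0 = 0"
          proof (cases "s = s0")
            case True then show ?thesis using rz by simp
          next
            case False
            then have "s < s0" using ss by simp
            then show ?thesis using r_zero_prop[OF cf ss(1) _ rz] by simp
          qed
          then show False using s0 t0 by simp
        qed
        have "t0 \<le> r s"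
        proof (cases "s = s0")
          case True then show ?thesis using s0 by simp
        next
          case False
          then have "s < s0" using ss by simp
          then have "r s0 < r s" using dec[of s s0] ss rspos s0 t0 by simp
          then show ?thesis using s0 by simp
        qed
        then have Dpos: "Dt (r s) > 0" using Dmono[of t0 "r s"] t0 by simp
        have Fnn: "0 \<le> p y x * cdf_Rplus (f y x) (r s)"
          using pxy posdens_int(3)[OF hyx] by simp
        have "tailf (g y x) s = ennreal (p y x * cdf_Rplus (f y x) (r s))"
          using tail2[OF rspos] r_inv_r[OF cf ss(1) rspos] by simp
        also have "\<dots> < ennreal (p x y * cdf_Rplus (f x y) (r s))"
          using Dpos Fnn unfolding Dt_def by (intro ennreal_lessI) auto
        also have "\<dots> = tailf (g x y) s"
          using tail1[OF rspos] r_inv_r[OF cf ss(1) rspos] by simp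
        finally show ?thesis .
      qed
      have [measurable]: "tailf (g y x) \<in> borel_measurable lborel" "tailf (g x y) \<in> borel_measurable lborel"
        using tailf_meas[OF dg(2)] tailf_meas[OF dg(1)] by auto
      have "ennreal Mm < ennreal P"
        unfolding A B
      proof (rule nn_integral_less)
        show "(\<lambda>s. ennreal (indicator {0<..} s) * tailf (g y x) s) \<in> borel_measurable lborel"
          by measurable
        show "(\<lambda>s. ennreal (indicator {0<..} s) * tailf (g x y) s) \<in> borel_measurable lborel"
          by measurable
        show "(\<integral>\<^sup>+ s. ennreal (indicator {0<..} s) * tailf (g y x) s \<partial>lborel) \<noteq> \<infinity>"
          using B[symmetric] by simp
        show "AE s in lborel. ennreal (indicator {0<..} s) * tailf (g y x) s
            \<le> ennreal (indicator {0<..} s) * tailf (g x y) s" by (rule AEle)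
        show "\<not> (AE s in lborel. ennreal (indicator {0<..} s) * tailf (g x y) s
            \<le> ennreal (indicator {0<..} s) * tailf (g y x) s)"
        proof
          assume "AE s in lborel. ennreal (indicator {0<..} s) * tailf (g x y) s
            \<le> ennreal (indicator {0<..} s) * tailf (g y x) s"
          then obtain N where N: "{s \<in> space lborel. \<not> (ennreal (indicator {0<..} s) * tailf (g x y) s
            \<le> ennreal (indicator {0<..} s) * tailf (g y x) s)} \<subseteq> N"
            "emeasure lborel N = 0" "N \<in> sets lborel"
            by (rule AE_E)
          have "{0<..s0} \<subseteq> N"
          proof
            fix s assume "s \<in> {0<..s0}"
            then have "0 < s" "s \<le> s0" by auto
            then have "\<not> (ennreal (indicator {0<..} s) * tailf (g x y) s
               \<le> ennreal (indicator {0<..} s) * tailf (g y x) s)"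
              using stail[of s] by (simp add: not_le)
            then show "s \<in> N" using N(1) by auto
          qed
          then have "emeasure lborel {0<..s0} \<le> emeasure lborel N"
            by (rule emeasure_mono[OF _ N(3)])
          then show False using N(2) s0 by simp
        qed
      qed
      then have "Mm < P" by (rule iffD1[OF ennreal_less_iff[OF PM(2)]])
      then show ?thesis using PM(3) by linarith
    qed
    ultimately show ?thesis by blast
  qed
  show ?thesis
  proof (intro conjI impI allI)
    fix u g r
    assume H: "AE t in lborel. t \<ge> 0 \<longrightarrow> q_ratio p f x y t \<ge> 1"
      and M: "RUM_CF X u g r \<and> rationalizes D p f u g r"
    show "u y \<le> u x" using key[OF H M] by (rule conjunct1)
  next
    fix u g r
    assume HS: "(AE t in lborel. t \<ge> 0 \<longrightarrow> q_ratio p f x y t \<ge> 1) \<and>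
           emeasure lborel {t. t \<ge> 0 \<and> q_ratio p f x y t > 1} > 0"
      and M: "RUM_CF X u g r \<and> rationalizes D p f u g r"
    show "u y < u x" using mp[OF conjunct2[OF key[OF conjunct1[OF HS] M]] conjunct2[OF HS]] .
  qed
qed

end
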